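(* Let $k\ge1$, $\alpha_i\in(1,2)$ and $l_i>0$ for $i=1,\dots,k$. Let $Q_{\mathbf n}=T_{\mathbf n}(q_{\boldsymbol\alpha})$ with $q_{\boldsymbol\alpha}(\boldsymbol\theta)=\sum_{i=1}^kl_i|\theta_i|^{\alpha_i}$, and let $R_{\mathbf n}=T_{\mathbf n}(r_{\boldsymbol\alpha})$ with $r_{\boldsymbol\alpha}(\boldsymbol\theta)=\sum_{i=1}^k l_i(2-2\cos\theta_i)^{\alpha_i/2}$, equivalently $R_{\mathbf n}=\sum_{i=1}^k I_{n_1\cdots n_{i-1}}\otimes l_iT_{n_i}\big((2-2\cos\theta)^{\alpha_i/2}\big)\otimes I_{n_{i+1}\cdots n_k}$. Then for every $\mathbf n\in\mathbb N^k$ and every nonzero $\mathbf z\in\mathbb R^{N(\mathbf n)}$, $$1<\frac{\mathbf z^\top Q_{\mathbf n}\mathbf z}{\mathbf z^\top R_{\mathbf n}\mathbf z}<\frac{\pi^2}{4}.$$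
   Context: $N(\mathbf n)=n_1\cdots n_k$. For $h\in L^1([-\pi,\pi]^k)$, $T_{\mathbf n}(h)=[\hat h_{\mathbf i-\mathbf j}]_{\mathbf i,\mathbf j=\mathbf 1}^{\mathbf n}$ is the $k$-level Toeplitz matrix with Fourier coefficients $\hat h_{\mathbf j}=\frac1{(2\pi)^k}\int h(\boldsymbol\theta)e^{\iota\langle\mathbf j,\boldsymbol\theta\rangle}d\boldsymbol\theta$; unilevel $T_n(h)$ analogously. *)

theory Defs
  imports "HOL-Analysis.Analysis"
begin

text \<open>k-level setting: the levels are indexed by a finite type 'k (so k = CARD('k) \<ge> 1).
  A symbol h is a function on real^'k; its Fourier coefficients are taken over [-pi,pi]^k.\<close>

definition fourier_coeff :: "(real^'k \<Rightarrow> real) \<Rightarrow> ('k \<Rightarrow> int) \<Rightarrow> complex" where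
  "fourier_coeff h j =
     integral (cbox (\<chi> i. - pi) (\<chi> i. pi))
       (\<lambda>\<theta>. complex_of_real (h \<theta>) *
             exp (\<i> * complex_of_real (\<Sum>l\<in>UNIV. real_of_int (j l) * \<theta> $ l)))
     / complex_of_real ((2 * pi) ^ CARD('k))"

definition multi_idx :: "('k \<Rightarrow> nat) \<Rightarrow> ('k \<Rightarrow> nat) set" where
  "multi_idx n = {i. \<forall>l. i l < n l}"

definition toeplitz_entry :: "(real^'k \<Rightarrow> real) \<Rightarrow> ('k \<Rightarrow> nat) \<Rightarrow> ('k \<Rightarrow> nat) \<Rightarrow> complex" where
  "toeplitz_entry h i j = fourier_coeff h (\<lambda>l. int (i l) - int (j l))"

definition toeplitz_qform :: "(real^'k \<Rightarrow> real) \<Rightarrow> ('k \<Rightarrow> nat) \<Rightarrow> (('k \<Rightarrow> nat) \<Rightarrow> real) \<Rightarrow> complex" where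
  "toeplitz_qform h n z =
     (\<Sum>i\<in>multi_idx n. \<Sum>j\<in>multi_idx n.
        complex_of_real (z i) * toeplitz_entry h i j * complex_of_real (z j))"

end

theory Submission imports Defs "HOL-Computational_Algebra.Polynomial" "HOL-Library.Countable" begin

lemma isCont_powr_pos:
  fixes f :: "'a::t2_space \<Rightarrow> real"
  assumes "isCont f x" "\<And>y. f y \<ge> 0" "a > 0"
  shows "isCont (\<lambda>y. f y powr a) x"
  unfolding isCont_def
  by (rule tendsto_powr'[where g="\<lambda>_. a"]) (use assms in \<open>auto simp: isCont_def\<close>)

lemma sin_over_x_mono:
  assumes "0 < y" "y \<le> pi/2"
  shows "2/pi \<le> sin y / y"
proof -
  have h: "y * cos y \<le> sin y" if "0 \<le> y" "y \<le> pi/2" for y :: real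
  proof -
    let ?f = "\<lambda>x. sin x - x * cos x"
    have "?f 0 \<le> ?f y"
      apply (rule DERIV_nonneg_imp_nondecreasing[OF that(1)])
      subgoal for u
        apply (rule exI[of _ "u * sin u"])
        using that by (auto intro!: derivative_eq_intros mult_nonneg_nonneg sin_ge_zero)
      done
    then show ?thesis by simp
  qed
  have "sin (pi/2) / (pi/2) \<le> sin y / y"
  proof (rule DERIV_nonpos_imp_nonincreasing[OF assms(2)])
    fix u assume u: "y \<le> u" "u \<le> pi/2"
    then have up: "u > 0" using assms by linarith
    show "\<exists>D. ((\<lambda>x. sin x / x) has_real_derivative D) (at u) \<and> D \<le> 0"
      apply (rule exI[of _ "(u * cos u - sin u) / u^2"])
      using up h[of u] u
      apply (auto intro!: derivative_eq_intros simp: divide_nonpos_pos power2_eq_square)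
      done
  qed
  then show ?thesis by simp
qed

lemma r_form: "(2 - 2 * cos (x::real)) powr (a/2) = (2 * \<bar>sin (x/2)\<bar>) powr a"
proof -
  have c: "2 - 2 * cos x = (2 * \<bar>sin (x/2)\<bar>)^2"
    using cos_double_sin[of "x/2"] by (simp add: power_mult_distrib)
  show ?thesis
  proof (cases "sin (x/2) = 0")
    case True then show ?thesis using c by simp
  next
    case False
    then have "(2 * \<bar>sin (x/2)\<bar>)^2 = (2 * \<bar>sin (x/2)\<bar>) powr 2"
      by (subst powr_realpow[symmetric]) auto
    then have "(2 - 2 * cos x) powr (a/2) = ((2 * \<bar>sin (x/2)\<bar>) powr 2) powr (a/2)"
      by (simp only: c)
    also have "\<dots> = (2 * \<bar>sin (x/2)\<bar>) powr a" by (subst powr_powr) simp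
    finally show ?thesis .
  qed
qed

lemma sin_strict: assumes "0 < y" "y < pi" shows "sin y < y"
proof -
  have "sin y = 2 * sin (y/2) * cos (y/2)" using sin_double[of "y/2"] by simp
  also have "\<dots> \<le> 2 * (y/2) * cos (y/2)"
    using sin_x_le_x[of "y/2"] assms cos_ge_zero[of "y/2"]
    by (intro mult_right_mono) auto
  also have "\<dots> < 2 * (y/2) * 1"
  proof -
    have "cos (y/2) < cos 0" using assms by (intro cos_monotone_0_pi) auto
    then show ?thesis using assms by simp
  qed
  finally show ?thesis by simp
qed

lemma coord_le:
  fixes x a :: real
  assumes "1 < a" "a < 2"
  shows "(2 - 2 * cos x) powr (a/2) \<le> \<bar>x\<bar> powr a"
proof -
  have "2 * \<bar>sin (x/2)\<bar> \<le> \<bar>x\<bar>" using abs_sin_x_le_abs_x[of "x/2"] by simp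
  then show ?thesis unfolding r_form using assms by (intro powr_mono2) auto
qed

lemma coord_mid:
  fixes x a :: real
  assumes "0 < a" "\<bar>x\<bar> \<le> pi"
  shows "\<bar>x\<bar> powr a \<le> (pi/2) powr a * (2 - 2 * cos x) powr (a/2)"
proof -
  have "\<bar>x\<bar> \<le> pi/2 * (2 * \<bar>sin (x/2)\<bar>)"
  proof (cases "x = 0")
    case False
    define y where "y = \<bar>x\<bar>/2"
    have y: "0 < y" "y \<le> pi/2" using False assms by (auto simp: y_def)
    have "\<bar>sin (x/2)\<bar> = sin y"
    proof -
      have "sin y \<ge> 0" using y by (intro sin_ge_zero) auto
      moreover have "\<bar>sin (x/2)\<bar> = \<bar>sin y\<bar>"
        by (cases "x \<ge> 0") (auto simp: y_def)
      ultimately show ?thesis by simp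
    qed
    moreover have "2/pi * y \<le> sin y" using sin_over_x_mono[OF y] y by (simp add: field_simps)
    ultimately show ?thesis by (simp add: y_def field_simps)
  qed simp
  then have "\<bar>x\<bar> powr a \<le> (pi/2 * (2 * \<bar>sin (x/2)\<bar>)) powr a"
    using assms by (intro powr_mono2) auto
  also have "\<dots> = (pi/2) powr a * (2 - 2 * cos x) powr (a/2)"
    unfolding r_form by (subst powr_mult) auto
  finally show ?thesis .
qed

lemma coord_le2:
  fixes x a :: real
  assumes "1 < a" "a < 2" "\<bar>x\<bar> \<le> pi"
  shows "\<bar>x\<bar> powr a \<le> pi\<^sup>2/4 * (2 - 2 * cos x) powr (a/2)"
proof -
  have "\<bar>x\<bar> powr a \<le> (pi/2) powr a * (2 - 2 * cos x) powr (a/2)"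
    using coord_mid[of a x] assms by auto
  also have "\<dots> \<le> (pi/2) powr 2 * (2 - 2 * cos x) powr (a/2)"
    using assms pi_gt3 by (intro mult_right_mono powr_mono) auto
  also have "(pi/2) powr 2 = pi\<^sup>2/4" by (simp add: power2_eq_square)
  finally show ?thesis .
qed

lemma coord_strict:
  fixes x a :: real
  assumes "1 < a" "a < 2" "0 < x" "x < pi"
  shows "(2 - 2 * cos x) powr (a/2) < \<bar>x\<bar> powr a"
    and "\<bar>x\<bar> powr a < pi\<^sup>2/4 * (2 - 2 * cos x) powr (a/2)"
proof -
  have s: "0 < sin (x/2)" using assms by (intro sin_gt_zero) auto
  have "2 * \<bar>sin (x/2)\<bar> < \<bar>x\<bar>" using sin_strict[of "x/2"] assms s by simp
  then show "(2 - 2 * cos x) powr (a/2) < \<bar>x\<bar> powr a"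
    unfolding r_form using assms s by (intro powr_less_mono2) auto
  have rpos: "(2 - 2 * cos x) powr (a/2) > 0" unfolding r_form using s by simp
  have "\<bar>x\<bar> powr a \<le> (pi/2) powr a * (2 - 2 * cos x) powr (a/2)"
    using coord_mid[of a x] assms by auto
  also have "\<dots> < (pi/2) powr 2 * (2 - 2 * cos x) powr (a/2)"
    using assms pi_gt3 rpos by (intro mult_strict_right_mono powr_less_mono) auto
  also have "(pi/2) powr 2 = pi\<^sup>2/4" by (simp add: power2_eq_square)
  finally show "\<bar>x\<bar> powr a < pi\<^sup>2/4 * (2 - 2 * cos x) powr (a/2)" .
qed

lemma integral_pos_point:
  fixes g :: "'a::euclidean_space \<Rightarrow> real"
  assumes cont: "continuous_on (cbox a b) g" and nn: "\<forall>x\<in>cbox a b. g x \<ge> 0"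
    and x0: "x0 \<in> box a b" and gx0: "g x0 > 0"
  shows "integral (cbox a b) g > 0"
proof -
  have cb: "continuous_on (box a b) g" using cont box_subset_cbox continuous_on_subset by blast
  have "open (box a b \<inter> g -` {g x0/2<..})"
    by (rule continuous_open_preimage[OF cb]) auto
  moreover have "x0 \<in> box a b \<inter> g -` {g x0/2<..}" using x0 gx0 by auto
  ultimately obtain c d where cd: "cbox c d \<subseteq> box a b \<inter> g -` {g x0/2<..}" "x0 \<in> box c d"
     "\<forall>i\<in>Basis. c \<bullet> i < d \<bullet> i"
    by (rule open_contains_cbox)
  have sub: "cbox c d \<subseteq> cbox a b" using cd(1) box_subset_cbox by blast
  have ic: "g integrable_on cbox c d"
    by (rule integrable_continuous) (rule continuous_on_subset[OF cont sub])
  have "0 < Henstock_Kurzweil_Integration.content (cbox c d) * (g x0/2)"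
    using cd(3) gx0 by (intro mult_pos_pos content_pos_lt) auto
  also have "Henstock_Kurzweil_Integration.content (cbox c d) * (g x0/2) = integral (cbox c d) (\<lambda>_. g x0/2)" by simp
  also have "\<dots> \<le> integral (cbox c d) g"
    by (rule integral_le) (use ic cd(1) in auto)
  also have "\<dots> \<le> integral (cbox a b) g"
    by (rule integral_subset_le[OF sub ic]) (use nn integrable_continuous[OF cont] in auto)
  finally show ?thesis .
qed

definition Ef :: "('k::finite \<Rightarrow> nat) \<Rightarrow> real^'k \<Rightarrow> complex" where
  "Ef i \<theta> = exp (\<i> * complex_of_real (\<Sum>l\<in>UNIV. real (i l) * \<theta> $ l))"

definition Pf :: "('k::finite \<Rightarrow> nat) \<Rightarrow> (('k \<Rightarrow> nat) \<Rightarrow> real) \<Rightarrow> real^'k \<Rightarrow> complex" where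
  "Pf n z \<theta> = (\<Sum>i\<in>multi_idx n. complex_of_real (z i) * Ef i \<theta>)"

lemma multi_idx_PiE: "multi_idx (n::'k::finite \<Rightarrow> nat) = Pi\<^sub>E UNIV (\<lambda>l. {..<n l})"
  by (auto simp: multi_idx_def PiE_def Pi_def)

lemma finite_multi_idx[simp]: "finite (multi_idx (n::'k::finite \<Rightarrow> nat))"
  unfolding multi_idx_PiE by (rule finite_PiE) auto

lemma continuous_Ef: "continuous_on S (Ef i)"
  unfolding Ef_def by (intro continuous_intros)

lemma exp_ab: "exp (\<i> * complex_of_real (A - B)) = exp (\<i> * complex_of_real A) * exp (cnj (\<i> * complex_of_real B))"
  by (simp add: exp_add[symmetric] algebra_simps)

lemma exp_diff_eq:
  "exp (\<i> * complex_of_real (\<Sum>l\<in>UNIV. real_of_int (int (i l) - int (j l)) * \<theta> $ l))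
   = Ef i \<theta> * cnj (Ef j \<theta>)"
proof -
  have e: "(\<Sum>l\<in>UNIV. real_of_int (int (i l) - int (j l)) * \<theta> $ l)
     = (\<Sum>l\<in>UNIV. real (i l) * \<theta> $ l) - (\<Sum>l\<in>UNIV. real (j l) * \<theta> $ l)"
    by (simp add: sum_subtractf[symmetric] algebra_simps)
  show ?thesis
    unfolding Ef_def exp_cnj e by (rule exp_ab)
qed

lemma pointwise_id:
  "(\<Sum>i\<in>multi_idx n. \<Sum>j\<in>multi_idx n. complex_of_real (z i) *
      (complex_of_real (h \<theta>) * (Ef i \<theta> * cnj (Ef j \<theta>))) * complex_of_real (z j))
   = complex_of_real (h \<theta> * (cmod (Pf n z \<theta>))\<^sup>2)"
proof -
  have pp: "Pf n z \<theta> * cnj (Pf n z \<theta>) = (\<Sum>i\<in>multi_idx n. \<Sum>j\<in>multi_idx n.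
       (complex_of_real (z i) * Ef i \<theta>) * (complex_of_real (z j) * cnj (Ef j \<theta>)))"
    unfolding Pf_def cnj_sum complex_cnj_mult complex_cnj_complex_of_real by (rule sum_product)
  have "complex_of_real (h \<theta> * (cmod (Pf n z \<theta>))\<^sup>2) = complex_of_real (h \<theta>) * (Pf n z \<theta> * cnj (Pf n z \<theta>))"
    by (simp add: complex_norm_square[symmetric])
  also have "\<dots> = (\<Sum>i\<in>multi_idx n. \<Sum>j\<in>multi_idx n. complex_of_real (z i) *
      (complex_of_real (h \<theta>) * (Ef i \<theta> * cnj (Ef j \<theta>))) * complex_of_real (z j))"
    unfolding pp sum_distrib_left by (intro sum.cong refl) (simp add: mult_ac)
  finally show ?thesis by simp
qed

lemma qform_integral:
  fixes h :: "real^'k::finite \<Rightarrow> real"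
  assumes hc: "continuous_on UNIV h"
  defines "B \<equiv> cbox (\<chi> i. - pi) (\<chi> i. pi) :: (real^'k) set"
  shows "toeplitz_qform h n z =
     complex_of_real (integral B (\<lambda>\<theta>. h \<theta> * (cmod (Pf n z \<theta>))\<^sup>2) / (2 * pi) ^ CARD('k))"
proof -
  define F where "F i j \<theta> = complex_of_real (h \<theta>) * (Ef i \<theta> * cnj (Ef j \<theta>))" for i j \<theta>
  define C where "C = complex_of_real ((2 * pi) ^ CARD('k))"
  have hcB: "continuous_on B h" using hc continuous_on_subset by blast
  have ent: "toeplitz_entry h i j = integral B (F i j) / C" for i j
    unfolding toeplitz_entry_def fourier_coeff_def F_def C_def B_def exp_diff_eq by simp
  have Fi: "F i j integrable_on B" for i j
    unfolding F_def B_def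
    by (rule integrable_continuous) (use hcB[unfolded B_def] in \<open>intro continuous_intros continuous_Ef\<close>)
  have hi: "((\<lambda>\<theta>. \<Sum>i\<in>multi_idx n. \<Sum>j\<in>multi_idx n. complex_of_real (z i) * F i j \<theta> * complex_of_real (z j))
      has_integral (\<Sum>i\<in>multi_idx n. \<Sum>j\<in>multi_idx n. complex_of_real (z i) * integral B (F i j) * complex_of_real (z j))) B"
    by (intro has_integral_sum finite_multi_idx has_integral_mult_left has_integral_mult_right
        integrable_integral Fi)
  define G where "G \<theta> = h \<theta> * (cmod (Pf n z \<theta>))\<^sup>2" for \<theta>
  have Gi: "G integrable_on B"
    unfolding G_def Pf_def B_def
    by (rule integrable_continuous) (use hcB[unfolded B_def] in \<open>intro continuous_intros continuous_Ef\<close>)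
  have hi2: "((\<lambda>\<theta>. \<Sum>i\<in>multi_idx n. \<Sum>j\<in>multi_idx n. complex_of_real (z i) * F i j \<theta> * complex_of_real (z j))
      has_integral complex_of_real (integral B G)) B"
    unfolding F_def pointwise_id G_def[symmetric]
    by (rule has_integral_of_real) (rule integrable_integral[OF Gi])
  have eq: "(\<Sum>i\<in>multi_idx n. \<Sum>j\<in>multi_idx n. complex_of_real (z i) * integral B (F i j) * complex_of_real (z j))
     = complex_of_real (integral B G)"
    using has_integral_unique[OF hi hi2] .
  have "toeplitz_qform h n z = (\<Sum>i\<in>multi_idx n. \<Sum>j\<in>multi_idx n. complex_of_real (z i) * integral B (F i j) * complex_of_real (z j)) / C"
    unfolding toeplitz_qform_def ent sum_divide_distrib by (intro sum.cong refl) simp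
  also have "\<dots> = complex_of_real (integral B G / (2 * pi) ^ CARD('k))"
    unfolding eq C_def by simp
  finally show ?thesis unfolding G_def .
qed

lemma geom_int: "(\<Sum>m<M. (int N - 1) * int N ^ m) = int N ^ M - 1"
  by (induction M) (auto simp: algebra_simps)

lemma digits_inj:
  fixes e :: "'k::finite \<Rightarrow> nat" and i j :: "'k \<Rightarrow> nat"
  assumes inj: "inj e" and iN: "\<forall>l. i l < N" and jN: "\<forall>l. j l < N"
    and eq: "(\<Sum>l\<in>UNIV. i l * N ^ e l) = (\<Sum>l\<in>UNIV. j l * N ^ e l)"
  shows "i = j"
proof (rule ccontr)
  assume "i \<noteq> j"
  define D where "D = {l. i l \<noteq> j l}"
  define d where "d l = int (i l) - int (j l)" for l
  have Dne: "D \<noteq> {}" using \<open>i \<noteq> j\<close> by (auto simp: D_def)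
  have fD: "finite D" by simp
  define m where "m = Max (e ` D)"
  have "m \<in> e ` D" unfolding m_def using Dne fD by (intro Max_in) auto
  then obtain l0 where l0: "l0 \<in> D" "e l0 = m" by auto
  have lt: "e l < e l0" if "l \<in> D - {l0}" for l
  proof -
    have "e l \<le> m" unfolding m_def using that fD by (intro Max_ge) auto
    moreover have "e l \<noteq> e l0" using inj that by (auto dest: injD)
    ultimately show ?thesis using l0 by auto
  qed
  have Npos: "N > 0" using iN by (metis gr_zeroI not_less0)
  have "0 = (\<Sum>l\<in>UNIV. d l * int N ^ e l)"
  proof -
    have "int (\<Sum>l\<in>UNIV. i l * N ^ e l) = int (\<Sum>l\<in>UNIV. j l * N ^ e l)" using eq by simp
    then show ?thesis unfolding d_def by (simp add: algebra_simps sum_subtractf)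
  qed
  also have "\<dots> = (\<Sum>l\<in>D. d l * int N ^ e l)"
    by (rule sum.mono_neutral_right) (auto simp: D_def d_def)
  also have "\<dots> = d l0 * int N ^ e l0 + (\<Sum>l\<in>D - {l0}. d l * int N ^ e l)"
    using l0(1) fD by (simp add: sum.remove)
  finally have z: "d l0 * int N ^ e l0 = - (\<Sum>l\<in>D - {l0}. d l * int N ^ e l)" by simp
  have "\<bar>\<Sum>l\<in>D - {l0}. d l * int N ^ e l\<bar> \<le> (\<Sum>l\<in>D - {l0}. \<bar>d l * int N ^ e l\<bar>)"
    by (rule sum_abs)
  also have "\<dots> \<le> (\<Sum>l\<in>D - {l0}. (int N - 1) * int N ^ e l)"
  proof (intro sum_mono)
    fix l
    have "\<bar>d l\<bar> \<le> int N - 1" using spec[OF iN, of l] spec[OF jN, of l] unfolding d_def by linarith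
    then show "\<bar>d l * int N ^ e l\<bar> \<le> (int N - 1) * int N ^ e l"
      by (simp add: abs_mult mult_right_mono)
  qed
  also have "\<dots> = (\<Sum>m\<in>e ` (D - {l0}). (int N - 1) * int N ^ m)"
  proof -
    have "inj_on e (D - {l0})" using inj by (meson inj_on_subset subset_UNIV)
    then show ?thesis unfolding sum.reindex[OF \<open>inj_on e (D - {l0})\<close>] o_def by simp
  qed
  also have "\<dots> \<le> (\<Sum>m<e l0. (int N - 1) * int N ^ m)"
    using lt Npos by (intro sum_mono2) auto
  also have "\<dots> = int N ^ e l0 - 1" by (rule geom_int)
  finally have "\<bar>- (\<Sum>l\<in>D - {l0}. d l * int N ^ e l)\<bar> \<le> int N ^ e l0 - 1"
    unfolding abs_minus_cancel .
  then have A: "\<bar>d l0 * int N ^ e l0\<bar> \<le> int N ^ e l0 - 1" unfolding z .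
  have "\<bar>d l0\<bar> \<ge> 1" using l0(1) by (auto simp: D_def d_def)
  moreover have "int N ^ e l0 \<ge> 0" by simp
  ultimately have "1 * int N ^ e l0 \<le> \<bar>d l0\<bar> * int N ^ e l0"
    by (rule mult_right_mono)
  then have "\<bar>d l0 * int N ^ e l0\<bar> \<ge> int N ^ e l0"
    unfolding abs_mult by simp
  with A show False by linarith
qed

lemma good_point:
  fixes n :: "'k::finite \<Rightarrow> nat" and z :: "('k \<Rightarrow> nat) \<Rightarrow> real"
  assumes "\<exists>i\<in>multi_idx n. z i \<noteq> 0"
  shows "\<exists>\<theta>::real^'k. (\<forall>l. 0 < \<theta>$l \<and> \<theta>$l < pi) \<and> Pf n z \<theta> \<noteq> 0"
proof -
  obtain i0 where i0: "i0 \<in> multi_idx n" "z i0 \<noteq> 0" using assms by blast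
  define e where "e = (to_nat :: 'k \<Rightarrow> nat)"
  have inje: "inj e" unfolding e_def by simp
  define N where "N = Suc (Max (range n))"
  have nN: "n l < N" for l unfolding N_def by (simp add: le_imp_less_Suc)
  define s where "s i = (\<Sum>l\<in>UNIV. i l * N ^ e l)" for i :: "'k \<Rightarrow> nat"
  have sinj: "i = j" if "i \<in> multi_idx n" "j \<in> multi_idx n" "s i = s j" for i j
  proof -
    have bN: "\<forall>l. k l < N" if "k \<in> multi_idx n" for k
    proof
      fix l
      have "k l < n l" using that unfolding multi_idx_def by simp
      then show "k l < N" using nN[of l] by linarith
    qed
    show ?thesis
      by (rule digits_inj[OF inje bN[OF that(1)] bN[OF that(2)]]) (use that(3) in \<open>simp only: s_def\<close>)
  qed
  define p where "p = (\<Sum>i\<in>multi_idx n. monom (complex_of_real (z i)) (s i))"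
  have "coeff p (s i0) = (\<Sum>i\<in>multi_idx n. if i = i0 then complex_of_real (z i) else 0)"
    unfolding p_def coeff_sum coeff_monom
  proof (intro sum.cong refl)
    fix i assume iI: "i \<in> multi_idx n"
    have "s i = s i0 \<longleftrightarrow> i = i0" using sinj[OF iI i0(1)] by blast
    then show "(if s i = s i0 then complex_of_real (z i) else 0) = (if i = i0 then complex_of_real (z i) else 0)"
      by simp
  qed
  also have "\<dots> = complex_of_real (z i0)" using i0(1) by simp
  finally have "coeff p (s i0) \<noteq> 0" using i0(2) by simp
  then have pnz: "p \<noteq> 0" by auto
  define W where "W = Max (range (\<lambda>l. N ^ e l))"
  have wW: "N ^ e l \<le> W" for l unfolding W_def by simp
  have w1: "1 \<le> N ^ e l" for l using nN[of l] by simp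
  have W1: "real W \<ge> 1" using wW[of undefined] w1[of undefined] by linarith
  define T where "T = {0<..<pi / real W}"
  have "pi / real W \<le> pi / 1"
    using W1 pi_gt_zero by (intro divide_left_mono) auto
  then have Tsub: "T \<subseteq> {0..pi}" unfolding T_def by auto
  have injT: "inj_on (\<lambda>t. exp (\<i> * complex_of_real t)) T"
  proof (rule inj_onI)
    fix x y assume xy: "x \<in> T" "y \<in> T" "exp (\<i> * complex_of_real x) = exp (\<i> * complex_of_real y)"
    then have "Re (exp (\<i> * complex_of_real x)) = Re (exp (\<i> * complex_of_real y))" by simp
    then have "cos x = cos y" by (simp add: Re_exp)
    moreover have "x \<in> {0..pi}" "y \<in> {0..pi}" using Tsub xy(1,2) by auto
    ultimately show "x = y" using cos_inj_pi[of x y] by auto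
  qed
  have "infinite T" unfolding T_def using W1 by simp
  then have "infinite ((\<lambda>t. exp (\<i> * complex_of_real t)) ` T)"
    using injT finite_imageD by blast
  moreover have "finite {x. poly p x = 0}" using pnz by (rule poly_roots_finite)
  ultimately have "\<not> ((\<lambda>t. exp (\<i> * complex_of_real t)) ` T \<subseteq> {x. poly p x = 0})"
    using finite_subset by blast
  then obtain t where t: "t \<in> T" "poly p (exp (\<i> * complex_of_real t)) \<noteq> 0"
    by blast
  define \<theta> where "\<theta> = (\<chi> l. t * real (N ^ e l) :: real^'k)"
  have thl: "0 < \<theta>$l \<and> \<theta>$l < pi" for l
  proof -
    have t0: "0 < t" "t * real W < pi" using t(1) W1 unfolding T_def by (auto simp: field_simps)
    have le: "t * real (N ^ e l) \<le> t * real W" using t0 wW[of l] by (intro mult_left_mono) auto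
    have w1r: "1 \<le> real (N ^ e l)" using w1[of l] by (metis of_nat_1 of_nat_le_iff)
    have pos: "0 < t * real (N ^ e l)" by (rule mult_pos_pos[OF t0(1)]) (use w1r in linarith)
    have th: "\<theta>$l = t * real (N ^ e l)" unfolding \<theta>_def by simp
    show ?thesis unfolding th using pos le t0 by linarith
  qed
  have eqP: "Pf n z \<theta> = poly p (exp (\<i> * complex_of_real t))"
  proof -
    have "Ef i \<theta> = exp (\<i> * complex_of_real t) ^ s i" for i
    proof -
      have "(\<Sum>l\<in>UNIV. real (i l) * \<theta> $ l) = real (s i) * t"
        unfolding \<theta>_def s_def by (simp add: sum_distrib_left algebra_simps)
      then have "Ef i \<theta> = exp (\<i> * complex_of_real (real (s i) * t))"
        unfolding Ef_def by (simp only:)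
      also have "\<dots> = exp (of_nat (s i) * (\<i> * complex_of_real t))"
        by (simp add: mult_ac)
      also have "\<dots> = exp (\<i> * complex_of_real t) ^ s i"
        by (rule exp_of_nat_mult)
      finally show ?thesis .
    qed
    then show ?thesis unfolding Pf_def p_def poly_sum poly_monom by simp
  qed
  show ?thesis
    by (rule exI[of _ \<theta>]) (use thl eqP t(2) in simp)
qed

lemma cont_q: "continuous_on UNIV (\<lambda>\<theta>::real^'k::finite. \<Sum>l\<in>UNIV. lw l * \<bar>\<theta> $ l\<bar> powr \<alpha> l)"
  if "\<And>l. 0 < \<alpha> l"
proof -
  have h: "isCont (\<lambda>\<theta>::real^'k. \<bar>\<theta> $ l\<bar> powr \<alpha> l) x" for l x
    by (rule isCont_powr_pos) (use that in \<open>auto intro!: continuous_intros\<close>)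
  then show ?thesis
    by (intro continuous_on_sum continuous_on_mult continuous_on_const continuous_at_imp_continuous_on ballI h)
qed

lemma cont_r: "continuous_on UNIV (\<lambda>\<theta>::real^'k::finite. \<Sum>l\<in>UNIV. lw l * (2 - 2 * cos (\<theta> $ l)) powr (\<alpha> l / 2))"
  if "\<And>l. 0 < \<alpha> l"
proof -
  have h: "isCont (\<lambda>\<theta>::real^'k. (2 - 2 * cos (\<theta> $ l)) powr (\<alpha> l / 2)) x" for l x
    by (rule isCont_powr_pos) (use that cos_le_one in \<open>auto intro!: continuous_intros\<close>)
  then show ?thesis
    by (intro continuous_on_sum continuous_on_mult continuous_on_const continuous_at_imp_continuous_on ballI h)
qed

theorem lemma8:
  fixes \<alpha> lw :: "'k::finite \<Rightarrow> real"
    and n :: "'k \<Rightarrow> nat"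
    and z :: "('k \<Rightarrow> nat) \<Rightarrow> real"
    and q r :: "real^'k \<Rightarrow> real"
  assumes "\<And>l. 1 < \<alpha> l \<and> \<alpha> l < 2"
    and "\<And>l. lw l > 0"
    and "q = (\<lambda>\<theta>. \<Sum>l\<in>UNIV. lw l * \<bar>\<theta> $ l\<bar> powr \<alpha> l)"
    and "r = (\<lambda>\<theta>. \<Sum>l\<in>UNIV. lw l * (2 - 2 * cos (\<theta> $ l)) powr (\<alpha> l / 2))"
    and "\<exists>i\<in>multi_idx n. z i \<noteq> 0"
  shows "toeplitz_qform q n z \<in> \<real> \<and> toeplitz_qform r n z \<in> \<real> \<and>
         1 < Re (toeplitz_qform q n z) / Re (toeplitz_qform r n z) \<and>
         Re (toeplitz_qform q n z) / Re (toeplitz_qform r n z) < pi\<^sup>2 / 4"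
proof -
  note a = assms(1) and lwp = assms(2) and qd = assms(3) and rd = assms(4)
  have apos: "\<And>l. 0 < \<alpha> l" using a by (metis less_trans zero_less_one)
  have qc: "continuous_on UNIV q" unfolding qd by (rule cont_q) (rule apos)
  have rc: "continuous_on UNIV r" unfolding rd by (rule cont_r) (rule apos)
  define B :: "(real^'k) set" where "B = cbox (\<chi> i. - pi) (\<chi> i. pi)"
  define P2 where "P2 \<theta> = (cmod (Pf n z \<theta>))\<^sup>2" for \<theta>
  define C where "C = (2 * pi) ^ CARD('k)"
  have Cpos: "C > 0" unfolding C_def by simp
  define IQ where "IQ = integral B (\<lambda>\<theta>. q \<theta> * P2 \<theta>)"
  define IR where "IR = integral B (\<lambda>\<theta>. r \<theta> * P2 \<theta>)"
  have fq: "toeplitz_qform q n z = complex_of_real (IQ / C)"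
    unfolding IQ_def P2_def C_def B_def by (rule qform_integral[OF qc])
  have fr: "toeplitz_qform r n z = complex_of_real (IR / C)"
    unfolding IR_def P2_def C_def B_def by (rule qform_integral[OF rc])
  have P2c: "continuous_on B P2" unfolding P2_def Pf_def by (intro continuous_intros continuous_Ef)
  have qcB: "continuous_on B q" and rcB: "continuous_on B r"
    using qc rc continuous_on_subset by blast+
  have iq: "(\<lambda>\<theta>. q \<theta> * P2 \<theta>) integrable_on B" unfolding B_def
    by (rule integrable_continuous) (use qcB P2c in \<open>auto simp: B_def intro!: continuous_intros\<close>)
  have ir: "(\<lambda>\<theta>. r \<theta> * P2 \<theta>) integrable_on B" unfolding B_def
    by (rule integrable_continuous) (use rcB P2c in \<open>auto simp: B_def intro!: continuous_intros\<close>)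
  have inB: "\<bar>\<theta> $ l\<bar> \<le> pi" if "\<theta> \<in> B" for \<theta> l
    using that unfolding B_def mem_box_cart by (simp add: abs_le_iff) (metis minus_le_iff)
  obtain \<theta>0 :: "real^'k" where th0: "\<forall>l. 0 < \<theta>0$l \<and> \<theta>0$l < pi" "Pf n z \<theta>0 \<noteq> 0"
    using good_point[OF assms(5)] by blast
  have th0B: "\<theta>0 \<in> box (\<chi> i. - pi) (\<chi> i. pi)" unfolding mem_box_cart(1)
  proof
    fix i
    have "0 < \<theta>0$i" "\<theta>0$i < pi" using th0(1) by auto
    then show "(\<chi> i. - pi) $ i < \<theta>0 $ i \<and> \<theta>0 $ i < (\<chi> i. pi) $ i" using pi_gt_zero by simp
  qed
  have P2pos: "P2 \<theta>0 > 0" using th0(2) unfolding P2_def by simp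
  have "0 < integral B (\<lambda>\<theta>. (q \<theta> - r \<theta>) * P2 \<theta>)"
    unfolding B_def
  proof (rule integral_pos_point[OF _ _ th0B])
    show "continuous_on (cbox (\<chi> i. - pi) (\<chi> i. pi)) (\<lambda>\<theta>. (q \<theta> - r \<theta>) * P2 \<theta>)"
      using qcB rcB P2c unfolding B_def by (intro continuous_intros) auto
    show "\<forall>x\<in>cbox (\<chi> i. - pi) (\<chi> i. pi). 0 \<le> (q x - r x) * P2 x"
    proof
      fix x :: "real^'k" assume "x \<in> cbox (\<chi> i. - pi) (\<chi> i. pi)"
      have "r x \<le> q x" unfolding qd rd
        by (intro sum_mono mult_left_mono coord_le) (use a lwp less_imp_le in auto)
      then show "0 \<le> (q x - r x) * P2 x" unfolding P2_def by simp
    qed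
    have "r \<theta>0 < q \<theta>0" unfolding qd rd
      by (intro sum_strict_mono mult_strict_left_mono coord_strict(1)) (use a lwp th0(1) in auto)
    then show "0 < (q \<theta>0 - r \<theta>0) * P2 \<theta>0" using P2pos by simp
  qed
  also have "integral B (\<lambda>\<theta>. (q \<theta> - r \<theta>) * P2 \<theta>) = IQ - IR"
    unfolding IQ_def IR_def using integral_diff[OF iq ir] by (simp add: algebra_simps)
  finally have QR: "IR < IQ" by simp
  have "0 < integral B (\<lambda>\<theta>. (pi\<^sup>2/4 * r \<theta> - q \<theta>) * P2 \<theta>)"
    unfolding B_def
  proof (rule integral_pos_point[OF _ _ th0B])
    show "continuous_on (cbox (\<chi> i. - pi) (\<chi> i. pi)) (\<lambda>\<theta>. (pi\<^sup>2/4 * r \<theta> - q \<theta>) * P2 \<theta>)"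
      using qcB rcB P2c unfolding B_def by (intro continuous_intros) auto
    show "\<forall>x\<in>cbox (\<chi> i. - pi) (\<chi> i. pi). 0 \<le> (pi\<^sup>2/4 * r x - q x) * P2 x"
    proof
      fix x :: "real^'k" assume xB: "x \<in> cbox (\<chi> i. - pi) (\<chi> i. pi)"
      have "q x \<le> pi\<^sup>2/4 * r x" unfolding qd rd sum_distrib_left
        by (intro sum_mono)
           (use a lwp inB[of x] xB coord_le2 in \<open>auto simp: B_def mult.left_commute intro!: mult_left_mono\<close>)
      then show "0 \<le> (pi\<^sup>2/4 * r x - q x) * P2 x" unfolding P2_def by simp
    qed
    have cs: "lw l * \<bar>\<theta>0$l\<bar> powr \<alpha> l < pi\<^sup>2/4 * (lw l * (2 - 2 * cos (\<theta>0$l)) powr (\<alpha> l / 2))" for l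
    proof -
      have "\<bar>\<theta>0$l\<bar> powr \<alpha> l < pi\<^sup>2/4 * (2 - 2 * cos (\<theta>0$l)) powr (\<alpha> l / 2)"
        by (rule coord_strict(2)) (use a th0(1) in auto)
      then have "lw l * \<bar>\<theta>0$l\<bar> powr \<alpha> l < lw l * (pi\<^sup>2/4 * (2 - 2 * cos (\<theta>0$l)) powr (\<alpha> l / 2))"
        by (rule mult_strict_left_mono) (rule lwp)
      then show ?thesis by (metis mult.left_commute)
    qed
    have "q \<theta>0 < pi\<^sup>2/4 * r \<theta>0" unfolding qd rd sum_distrib_left
      by (intro sum_strict_mono cs) auto
    then show "0 < (pi\<^sup>2/4 * r \<theta>0 - q \<theta>0) * P2 \<theta>0" using P2pos by simp
  qed
  also have "integral B (\<lambda>\<theta>. (pi\<^sup>2/4 * r \<theta> - q \<theta>) * P2 \<theta>) = pi\<^sup>2/4 * IR - IQ"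
  proof -
    have icr: "(\<lambda>\<theta>. pi\<^sup>2/4 * (r \<theta> * P2 \<theta>)) integrable_on B" using ir by simp
    have "integral B (\<lambda>\<theta>. (pi\<^sup>2/4 * r \<theta> - q \<theta>) * P2 \<theta>)
        = integral B (\<lambda>\<theta>. pi\<^sup>2/4 * (r \<theta> * P2 \<theta>) - q \<theta> * P2 \<theta>)"
      by (rule integral_cong) (simp add: algebra_simps)
    also have "\<dots> = integral B (\<lambda>\<theta>. pi\<^sup>2/4 * (r \<theta> * P2 \<theta>)) - IQ"
      unfolding IQ_def by (rule integral_diff[OF icr iq])
    also have "integral B (\<lambda>\<theta>. pi\<^sup>2/4 * (r \<theta> * P2 \<theta>)) = pi\<^sup>2/4 * IR"
      unfolding IR_def by (rule integral_mult_right)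
    finally show ?thesis .
  qed
  finally have QR2: "IQ < pi\<^sup>2/4 * IR" by simp
  have "3\<^sup>2 < pi\<^sup>2" using pi_gt3 by (intro power_strict_mono) auto
  then have pi4: "pi\<^sup>2/4 > 1" by simp
  have IRpos: "IR > 0"
  proof (rule ccontr)
    assume "\<not> IR > 0"
    then have "pi\<^sup>2/4 * IR \<le> 1 * IR"
      by (intro mult_right_mono_neg) (use pi4 in auto)
    then show False using QR QR2 by linarith
  qed
  have ratio: "(IQ / C) / (IR / C) = IQ / IR" using Cpos by simp
  show ?thesis
    unfolding fq fr Re_complex_of_real ratio
    using QR QR2 IRpos by (simp add: field_simps)
qed

end
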